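(* Let $t,\ell,m$ be integers with $1 \le t \le \ell \le m$. Then $$\hat{w}_1(t;\ell,m)=q^{\ell+m-2}\,\nu_{t-1}(\ell-1,m-1).$$
   Context: $q$ is a prime power and $\mathbb{F}_q$ the field with $q$ elements. For nonnegative integers $a,b,t$, $\mu_t(a,b)$ denotes the number of $a\times b$ matrices over $\mathbb{F}_q$ of rank exactly $t$ (so $\mu_0(a,b)=1$), and $\nu_t(a,b)=\sum_{s=0}^{t}\mu_s(a,b)$ is the number of $a\times b$ matrices over $\mathbb{F}_q$ of rank at most $t$. For an $\ell\times m$ matrix $M=(m_{ij})$ and $0\le r\le \ell$, the $r$-th partial trace is $\tau_r(M)=m_{11}+m_{22}+\cdots+m_{rr}$ (with $\tau_0=0$). For $0\le r\le \ell$ and $1\le t\le \ell$, define $$\hat{w}_r(t;\ell,m)=\frac{1}{q-1}\,\bigl|\{M\in \mathrm{Mat}_{\ell\times m}(\mathbb{F}_q): 1\le \mathrm{rk}(M)\le t,\ \tau_r(M)\ne 0\}\bigr|.$$ *)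

theory Defs
  imports "Jordan_Normal_Form.DL_Rank"
begin

text \<open>Matrices over the finite field 'a (q = CARD('a)) are JNF matrices;
  Mat_{a x b}(F_q) is carrier_mat a b. Rank is the JNF rank (dimension of column span).\<close>

definition mrank :: "'a::{finite,field} mat \<Rightarrow> nat" where
  "mrank M = vec_space.rank (dim_row M) M"

definition mu :: "'a::{finite,field} itself \<Rightarrow> nat \<Rightarrow> nat \<Rightarrow> nat \<Rightarrow> nat" where
  "mu _ t a b = card {M :: 'a mat. M \<in> carrier_mat a b \<and> mrank M = t}"

definition nu :: "'a::{finite,field} itself \<Rightarrow> nat \<Rightarrow> nat \<Rightarrow> nat \<Rightarrow> nat" where
  "nu ty t a b = (\<Sum>s\<le>t. mu ty s a b)"

definition partial_trace :: "nat \<Rightarrow> 'a::comm_monoid_add mat \<Rightarrow> 'a" where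
  "partial_trace r M = (\<Sum>i<r. M $$ (i, i))"

definition w_hat :: "'a::{finite,field} itself \<Rightarrow> nat \<Rightarrow> nat \<Rightarrow> nat \<Rightarrow> nat \<Rightarrow> real" where
  "w_hat _ r t l m =
     real (card {M :: 'a mat. M \<in> carrier_mat l m \<and> 1 \<le> mrank M \<and> mrank M \<le> t
                  \<and> partial_trace r M \<noteq> 0}) / (real (card (UNIV :: 'a set)) - 1)"

end

theory Submission
  imports Defs "Jordan_Normal_Form.Matrix_Kernel"
begin


context vec_space begin

lemma rank_witness:
  assumes A: "A \<in> carrier_mat n nc"
  shows "\<exists>T. finite T \<and> T \<subseteq> set (cols A) \<and> lin_indpt T \<and> rank A = card T \<and> set (cols A) \<subseteq> span T"
proof -
  have li0: "lin_indpt {}" unfolding lin_dep_def by auto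
  have "\<exists>T. finite T \<and> maximal T (\<lambda>T. T \<subseteq> set (cols A) \<and> lin_indpt T) \<and> {} \<subseteq> T"
    by (rule maximal_exists_superset[of "set (cols A)"]) (use li0 in auto)
  then obtain T where T: "finite T" "maximal T (\<lambda>T. T \<subseteq> set (cols A) \<and> lin_indpt T)"
    by blast
  have TC: "T \<subseteq> set (cols A)" "lin_indpt T" using T(2) unfolding maximal_def by auto
  have colsC: "set (cols A) \<subseteq> carrier_vec n" using A cols_dim by blast
  have Tc: "T \<subseteq> carrier_vec n" using TC colsC by auto
  have "set (cols A) \<subseteq> span T"
  proof
    fix v assume v: "v \<in> set (cols A)"
    show "v \<in> span T"
    proof (cases "v \<in> T")
      case True thus ?thesis using span_mem Tc by auto
    next
      case False
      have "\<not> lin_indpt (T \<union> {v})"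
      proof
        assume "lin_indpt (T \<union> {v})"
        then have "T \<union> {v} = T" using T(2) v TC unfolding maximal_def by blast
        thus False using False by auto
      qed
      thus ?thesis using lin_dep_iff_in_span[OF Tc TC(2) _ False] v colsC by auto
    qed
  qed
  thus ?thesis using T TC rank_card_indpt[OF A T(2)] by auto
qed

lemma rank_upper:
  assumes A: "A \<in> carrier_mat n nc" and B: "finite B" "B \<subseteq> carrier_vec n"
    and sub: "set (cols A) \<subseteq> span B"
  shows "rank A \<le> card B"
proof -
  obtain T where T: "finite T" "T \<subseteq> set (cols A)" "lin_indpt T" "rank A = card T"
    using rank_witness[OF A] by blast
  have "T \<subseteq> span B" using T(2) sub by auto
  from replacement[OF T(1) B(1) B(2) T(3) this]
  show ?thesis using T(4) by (elim exE conjE) linarith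
qed

lemma rank_lower:
  assumes A: "A \<in> carrier_mat n nc" and L: "finite L" "L \<subseteq> carrier_vec n" "lin_indpt L"
    and sub: "L \<subseteq> span (set (cols A))"
  shows "card L \<le> rank A"
proof -
  obtain T where T: "finite T" "T \<subseteq> set (cols A)" "lin_indpt T" "rank A = card T"
     "set (cols A) \<subseteq> span T"
    using rank_witness[OF A] by blast
  have colsC: "set (cols A) \<subseteq> carrier_vec n" using A cols_dim by blast
  have Tc: "T \<subseteq> carrier_vec n" using T colsC by auto
  have "span (set (cols A)) \<subseteq> span T"
    using span_is_subset[OF T(5) span_is_submodule[OF Tc]] .
  then have "L \<subseteq> span T" using sub by auto
  from replacement[OF L(1) T(1) Tc L(3) this]
  show ?thesis using T(4) by (elim exE conjE) linarith
qed

end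



lemma vec_restrict_eq: fixes v :: "'a vec" assumes v: "v \<in> carrier_vec n"
  shows  "v = vec n (\<lambda>i. if i < n then v $ i else undefined)"
proof (rule eq_vecI)
  have d: "dim_vec v = n" using v by (rule carrier_vecD)
  show "dim_vec v = dim_vec (vec n (\<lambda>i. if i < n then v $ i else undefined))" using d by simp
  fix i assume "i < dim_vec (vec n (\<lambda>i. if i < n then v $ i else undefined))"
  then have i: "i < n" by simp
  show "v $ i = vec n (\<lambda>i. if i < n then v $ i else undefined) $ i" using i by simp
qed

lemma mat_restrict_eq: fixes M :: "'a mat" assumes M: "M \<in> carrier_mat n k"
  shows  "M = mat n k (\<lambda>p. if p \<in> {..<n} \<times> {..<k} then M $$ p else undefined)"
proof (rule eq_matI)
  have d: "dim_row M = n" "dim_col M = k" using M by auto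
  show "dim_row M = dim_row (mat n k (\<lambda>p. if p \<in> {..<n} \<times> {..<k} then M $$ p else undefined))" using d by simp
  show "dim_col M = dim_col (mat n k (\<lambda>p. if p \<in> {..<n} \<times> {..<k} then M $$ p else undefined))" using d by simp
  fix i j assume "i < dim_row (mat n k (\<lambda>p. if p \<in> {..<n} \<times> {..<k} then M $$ p else undefined))"
     "j < dim_col (mat n k (\<lambda>p. if p \<in> {..<n} \<times> {..<k} then M $$ p else undefined))"
  then have i: "i < n" "j < k" by simp_all
  show "M $$ (i, j) = mat n k (\<lambda>p. if p \<in> {..<n} \<times> {..<k} then M $$ p else undefined) $$ (i, j)" using i by simp
qed

lemma card_carrier_vec': "card (carrier_vec n :: 'a::finite vec set) = card (UNIV :: 'a set) ^ n"
proof -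
  have e: "carrier_vec n = (\<lambda>f. vec n f) ` ({..<n} \<rightarrow>\<^sub>E (UNIV :: 'a set))"
  proof (intro equalityI subsetI)
    fix v :: "'a vec" assume v: "v \<in> carrier_vec n"
    have "v = vec n (\<lambda>i. if i < n then v $ i else undefined)" using v by (rule vec_restrict_eq)
    moreover have "(\<lambda>i. if i < n then v $ i else undefined) \<in> {..<n} \<rightarrow>\<^sub>E UNIV" by (simp add: PiE_def extensional_def)
    ultimately show "v \<in> (\<lambda>f. vec n f) ` ({..<n} \<rightarrow>\<^sub>E UNIV)" by (rule image_eqI)
  next
    fix v :: "'a vec" assume "v \<in> (\<lambda>f. vec n f) ` ({..<n} \<rightarrow>\<^sub>E UNIV)"
    then show "v \<in> carrier_vec n" by auto
  qed
  have i: "inj_on (\<lambda>f. vec n f) ({..<n} \<rightarrow>\<^sub>E (UNIV :: 'a set))"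
  proof (rule inj_onI)
    fix f g :: "nat \<Rightarrow> 'a" assume f: "f \<in> {..<n} \<rightarrow>\<^sub>E UNIV" and g: "g \<in> {..<n} \<rightarrow>\<^sub>E UNIV"
      and e: "vec n f = vec n g"
    show "f = g"
    proof
      fix i show "f i = g i"
      proof (cases "i < n")
        case True then show ?thesis using arg_cong[OF e, of "\<lambda>v. v $ i"] by simp
      next
        case False then show ?thesis using f g by (auto simp: PiE_def extensional_def)
      qed
    qed
  qed
  have "card (carrier_vec n :: 'a vec set) = card ({..<n} \<rightarrow>\<^sub>E (UNIV :: 'a set))"
    unfolding e by (rule card_image[OF i])
  also have "\<dots> = card (UNIV :: 'a set) ^ n" by (simp add: card_PiE)
  finally show ?thesis .
qed

lemma finite_carrier_mat': "finite (carrier_mat n k :: 'a::finite mat set)"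
proof -
  have "carrier_mat n k \<subseteq> (\<lambda>f. mat n k f) ` ({..<n} \<times> {..<k} \<rightarrow>\<^sub>E (UNIV :: 'a set))"
  proof
    fix M :: "'a mat" assume M: "M \<in> carrier_mat n k"
    have "M = mat n k (\<lambda>p. if p \<in> {..<n} \<times> {..<k} then M $$ p else undefined)" using M by (rule mat_restrict_eq)
    moreover have "(\<lambda>p. if p \<in> {..<n} \<times> {..<k} then M $$ p else undefined) \<in> {..<n} \<times> {..<k} \<rightarrow>\<^sub>E UNIV"
      by (simp add: PiE_def extensional_def)
    ultimately show "M \<in> (\<lambda>f. mat n k f) ` ({..<n} \<times> {..<k} \<rightarrow>\<^sub>E UNIV)" by (rule image_eqI)
  qed
  moreover have "finite ({..<n} \<times> {..<k} \<rightarrow>\<^sub>E (UNIV :: 'a set))" by (simp add: finite_PiE)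
  ultimately show ?thesis by (rule finite_subset[OF _ finite_imageI])
qed




definition u0 :: "'a::field \<Rightarrow> 'a vec \<Rightarrow> 'a vec" where
  "u0 a c = vec (Suc (dim_vec c)) (\<lambda>i. if i = 0 then a else c $ (i - 1))"

definition blk :: "'a::field \<Rightarrow> 'a vec \<Rightarrow> 'a vec \<Rightarrow> 'a mat \<Rightarrow> 'a mat" where
  "blk a r c N = mat (Suc (dim_vec c)) (Suc (dim_vec r)) (\<lambda>(i,j). if i = 0 then (if j = 0 then a else r $ (j - 1))
      else (if j = 0 then c $ (i - 1) else N $$ (i - 1, j - 1) + c $ (i - 1) * r $ (j - 1) / a))"

lemma blk_carrier: "r \<in> carrier_vec k \<Longrightarrow> c \<in> carrier_vec n \<Longrightarrow> blk a r c N \<in> carrier_mat (Suc n) (Suc k)"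
  unfolding blk_def by auto

lemma u0_carrier: "c \<in> carrier_vec n \<Longrightarrow> u0 a c \<in> carrier_vec (Suc n)"
  unfolding u0_def by auto

lemma padl_index: "v \<in> carrier_vec n \<Longrightarrow> i < Suc n \<Longrightarrow>
   (0\<^sub>v 1 @\<^sub>v v) $ i = (if i = 0 then 0 else v $ (i - 1))"
  by (subst index_append_vec) auto

lemma padl_carrier: "v \<in> carrier_vec n \<Longrightarrow> (0\<^sub>v 1 @\<^sub>v v) \<in> carrier_vec (Suc n)"
  using append_carrier_vec[OF zero_carrier_vec[of 1], of v n] by simp

lemma col_blk0: assumes r: "r \<in> carrier_vec k" and c: "c \<in> carrier_vec n"
  shows "col (blk a r c N) 0 = u0 a c"
proof -
  have "col (blk a r c N) 0 = vec (Suc (dim_vec c)) (\<lambda>i. if i = 0 then a else c $ (i - 1))"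
    unfolding blk_def by (subst col_mat) auto
  thus ?thesis unfolding u0_def .
qed

lemma col_blkS: assumes a: "a \<noteq> 0" and r: "r \<in> carrier_vec k" and c: "c \<in> carrier_vec n"
  and N: "N \<in> carrier_mat n k" and j: "j < k"
  shows "col (blk a r c N) (Suc j) = (0\<^sub>v 1 @\<^sub>v col N j) + (r $ j / a) \<cdot>\<^sub>v u0 a c"
proof (rule eq_vecI)
  have dc: "dim_vec c = n" and dr: "dim_vec r = k" using r c by auto
  have cN: "col N j \<in> carrier_vec n" using N j by auto
  show "dim_vec (col (blk a r c N) (Suc j)) = dim_vec ((0\<^sub>v 1 @\<^sub>v col N j) + (r $ j / a) \<cdot>\<^sub>v u0 a c)"
    using dc dr cN unfolding blk_def u0_def by simp
  fix i assume "i < dim_vec ((0\<^sub>v 1 @\<^sub>v col N j) + (r $ j / a) \<cdot>\<^sub>v u0 a c)"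
  then have i: "i < Suc n" using dc unfolding u0_def by simp
  have l: "col (blk a r c N) (Suc j) $ i = blk a r c N $$ (i, Suc j)"
    using i j dc dr unfolding blk_def by (subst index_col) auto
  have b: "blk a r c N $$ (i, Suc j) = (if i = 0 then r $ j else N $$ (i - 1, j) + c $ (i - 1) * r $ j / a)"
    using i j dc dr unfolding blk_def by simp
  have rr: "((0\<^sub>v 1 @\<^sub>v col N j) + (r $ j / a) \<cdot>\<^sub>v u0 a c) $ i
     = (0\<^sub>v 1 @\<^sub>v col N j) $ i + (r $ j / a) * (u0 a c $ i)"
    using i dc cN unfolding u0_def by simp
  have p: "(0\<^sub>v 1 @\<^sub>v col N j) $ i = (if i = 0 then 0 else N $$ (i - 1, j))"
    using padl_index[OF cN i] N j i by (cases i) auto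
  have u: "u0 a c $ i = (if i = 0 then a else c $ (i - 1))" using i dc unfolding u0_def by simp
  show "col (blk a r c N) (Suc j) $ i = ((0\<^sub>v 1 @\<^sub>v col N j) + (r $ j / a) \<cdot>\<^sub>v u0 a c) $ i"
    unfolding l b rr p u using a by (simp add: field_simps)
qed

lemma set_cols_blk: assumes a: "a \<noteq> 0" and r: "r \<in> carrier_vec k" and c: "c \<in> carrier_vec n"
  and N: "N \<in> carrier_mat n k"
  shows "set (cols (blk a r c N)) = insert (u0 a c) ((\<lambda>j. (0\<^sub>v 1 @\<^sub>v col N j) + (r $ j / a) \<cdot>\<^sub>v u0 a c) ` {..<k})"
proof -
  have dcol: "dim_col (blk a r c N) = Suc k" using blk_carrier[OF r c] by auto
  have "set (cols (blk a r c N)) = col (blk a r c N) ` {0..<Suc k}" unfolding cols_def dcol by (simp only: set_map set_upt)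
  also have "{0..<Suc k} = insert 0 (Suc ` {..<k})" by (simp only: atLeast0LessThan lessThan_Suc_eq_insert_0)
  also have "col (blk a r c N) ` insert 0 (Suc ` {..<k}) = insert (u0 a c) ((\<lambda>j. (0\<^sub>v 1 @\<^sub>v col N j) + (r $ j / a) \<cdot>\<^sub>v u0 a c) ` {..<k})"
    using col_blk0[OF r c] col_blkS[OF a r c N] by (auto simp: image_iff)
  finally show ?thesis .
qed

lemma rank_blk:
  fixes N :: "'a::field mat"
  assumes a: "a \<noteq> 0" and r: "r \<in> carrier_vec k" and c: "c \<in> carrier_vec n" and N: "N \<in> carrier_mat n k"
  shows "vec_space.rank (Suc n) (blk a r c N) = Suc (vec_space.rank n N)"
proof -
  interpret S: vec_space "TYPE('a)" "Suc n" .
  interpret T: vec_space "TYPE('a)" n .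
  interpret O: vec_space "TYPE('a)" 1 .
  define M where "M = blk a r c N"
  define u where "u = u0 a c"
  define pad :: "'a vec \<Rightarrow> 'a vec" where "pad = (\<lambda>v. 0\<^sub>v 1 @\<^sub>v v)"
  have M: "M \<in> carrier_mat (Suc n) (Suc k)" unfolding M_def using blk_carrier[OF r c] .
  have u: "u \<in> carrier_vec (Suc n)" unfolding u_def using u0_carrier[OF c] .
  have dc: "dim_vec c = n" using c by auto
  have u_0: "u $ 0 = a" unfolding u_def u0_def by simp
  have colsM: "set (cols M) = insert u ((\<lambda>j. pad (col N j) + (r $ j / a) \<cdot>\<^sub>v u) ` {..<k})"
    unfolding M_def u_def pad_def using set_cols_blk[OF a r c N] .
  have colsN: "set (cols N) = col N ` {..<k}"
    using N unfolding cols_def by (auto simp: atLeast0LessThan)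
  have padc: "\<And>v. v \<in> carrier_vec n \<Longrightarrow> pad v \<in> carrier_vec (Suc n)" unfolding pad_def by (rule padl_carrier)
  have pad0: "\<And>v. v \<in> carrier_vec n \<Longrightarrow> pad v $ 0 = 0" unfolding pad_def using padl_index by fastforce
  obtain T' where T': "finite T'" "T' \<subseteq> set (cols N)" "T.lin_indpt T'" "T.rank N = card T'"
     "set (cols N) \<subseteq> T.span T'"
    using T.rank_witness[OF N] by blast
  have colsNc: "set (cols N) \<subseteq> carrier_vec n" using cols_dim[of N] N by simp
  have T'c: "T' \<subseteq> carrier_vec n" using T' colsNc by auto
  have padT'c: "pad ` T' \<subseteq> carrier_vec (Suc n)" using T'c padc by auto
  have spanpad: "pad ` T.span T' = S.span (pad ` T')"
    using vardim.span_pad(2)[OF T'c, of 1] unfolding pad_def by simp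
  have spanT'c: "T.span T' \<subseteq> carrier_vec n" using T.span_closed[OF T'c] by auto
  have u_notin: "u \<notin> S.span (pad ` T')"
  proof
    assume "u \<in> S.span (pad ` T')"
    then obtain v where "v \<in> T.span T'" "u = pad v" unfolding spanpad[symmetric] by auto
    then have "u $ 0 = 0" using pad0 spanT'c by auto
    thus False using u_0 a by simp
  qed
  have u_notin2: "u \<notin> pad ` T'"
    using u_notin S.span_mem[OF padT'c] by blast
  have padli: "S.lin_indpt (pad ` T')"
  proof -
    have e: "\<not> O.lin_dep {}" unfolding O.lin_dep_def by auto
    have "\<not> module.lin_dep class_ring (module_vec TYPE('a) (1 + n)) ((\<lambda>v. v @\<^sub>v 0\<^sub>v n) ` {} \<union> (\<lambda>v. 0\<^sub>v 1 @\<^sub>v v) ` T')"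
      by (rule vardim.padr_padl_lindep) (use e T'c T'(3) in auto)
    thus ?thesis unfolding pad_def by simp
  qed
  have sub_u: "\<And>B x s. B \<subseteq> carrier_vec (Suc n) \<Longrightarrow> u \<in> S.span B \<Longrightarrow> x \<in> S.span B \<Longrightarrow> (s::'a) \<in> UNIV
      \<Longrightarrow> x + s \<cdot>\<^sub>v u \<in> S.span B"
  proof -
    fix B x s assume B: "B \<subseteq> carrier_vec (Suc n)" and uB: "u \<in> S.span B" and xB: "x \<in> S.span B"
    have "s \<cdot>\<^sub>v u \<in> S.span B"
      using submodule.smult_closed[OF S.span_is_submodule[OF B], of s u] uB by simp
    thus "x + s \<cdot>\<^sub>v u \<in> S.span B" using S.span_add1[OF B xB] by simp
  qed
  define B where "B = insert u (pad ` T')"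
  have Bc: "B \<subseteq> carrier_vec (Suc n)" unfolding B_def using u padT'c by auto
  have Bfin: "finite B" unfolding B_def using T'(1) by auto
  have cardB: "card B = Suc (card T')"
  proof -
    have "inj_on pad T'" using inj_on_subset[OF vardim.padl_inj T'c] unfolding pad_def by blast
    then have "card (pad ` T') = card T'" by (rule card_image)
    thus ?thesis unfolding B_def using u_notin2 T'(1) by simp
  qed
  have "set (cols M) \<subseteq> S.span B"
  proof
    fix x assume "x \<in> set (cols M)"
    then consider "x = u" | j where "j < k" "x = pad (col N j) + (r $ j / a) \<cdot>\<^sub>v u"
      unfolding colsM by auto
    then show "x \<in> S.span B"
    proof cases
      case 1 then show ?thesis using S.span_mem[OF Bc] unfolding B_def by auto
    next
      case (2 j)
      have "col N j \<in> T.span T'" using T'(5) colsN 2(1) by auto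
      then have "pad (col N j) \<in> S.span (pad ` T')" using spanpad by auto
      moreover have "S.span (pad ` T') \<subseteq> S.span B" by (rule S.span_is_monotone) (auto simp: B_def)
      ultimately have "pad (col N j) \<in> S.span B" by auto
      moreover have "u \<in> S.span B" using S.span_mem[OF Bc] unfolding B_def by auto
      ultimately show ?thesis unfolding 2(2) using sub_u[OF Bc] by auto
    qed
  qed
  then have up: "S.rank M \<le> Suc (T.rank N)"
    using S.rank_upper[OF M Bfin Bc] cardB T'(4) by simp
  have Lli: "S.lin_indpt B"
  proof -
    have "\<not> S.lin_dep (pad ` T' \<union> {u})"
      using S.lin_dep_iff_in_span[OF padT'c padli u u_notin2] u_notin by simp
    thus ?thesis unfolding B_def by (simp add: insert_commute)
  qed
  have colsMc: "set (cols M) \<subseteq> carrier_vec (Suc n)" using cols_dim[of M] M by simp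
  have uM: "u \<in> S.span (set (cols M))" using S.span_mem[OF colsMc] colsM by auto
  have "B \<subseteq> S.span (set (cols M))"
  proof
    fix x assume "x \<in> B"
    then consider "x = u" | t where "t \<in> T'" "x = pad t" unfolding B_def by auto
    then show "x \<in> S.span (set (cols M))"
    proof cases
      case 1 then show ?thesis using uM by simp
    next
      case (2 t)
      then obtain j where j: "j < k" "t = col N j" using T'(2) colsN by auto
      have tc: "t \<in> carrier_vec n" using 2(1) T'c by auto
      have y: "pad t + (r $ j / a) \<cdot>\<^sub>v u \<in> S.span (set (cols M))"
        using S.span_mem[OF colsMc] colsM j by auto
      have "x = (pad t + (r $ j / a) \<cdot>\<^sub>v u) + (- (r $ j / a)) \<cdot>\<^sub>v u"
      proof (rule eq_vecI)
        show "dim_vec x = dim_vec (pad t + (r $ j / a) \<cdot>\<^sub>v u + - (r $ j / a) \<cdot>\<^sub>v u)"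
          using 2(2) padc[OF tc] u by simp
        fix i assume "i < dim_vec (pad t + (r $ j / a) \<cdot>\<^sub>v u + - (r $ j / a) \<cdot>\<^sub>v u)"
        then have i: "i < Suc n" using padc[OF tc] u by simp
        show "x $ i = (pad t + (r $ j / a) \<cdot>\<^sub>v u + - (r $ j / a) \<cdot>\<^sub>v u) $ i"
          using i 2(2) padc[OF tc] u by simp
      qed
      then show ?thesis using sub_u[OF colsMc uM y] by simp
    qed
  qed
  then have lo: "Suc (T.rank N) \<le> S.rank M"
    using S.rank_lower[OF M Bfin Bc Lli] cardB T'(4) by simp
  show ?thesis using up lo unfolding M_def by simp
qed




lemma blk_index: "i < Suc (dim_vec c) \<Longrightarrow> j < Suc (dim_vec r) \<Longrightarrow> blk a r c N $$ (i, j) =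
   (if i = 0 then (if j = 0 then a else r $ (j - 1))
      else (if j = 0 then c $ (i - 1) else N $$ (i - 1, j - 1) + c $ (i - 1) * r $ (j - 1) / a))"
  unfolding blk_def by simp

definition gsplit :: "'a::field mat \<Rightarrow> 'a \<times> 'a vec \<times> 'a vec \<times> 'a mat" where
  "gsplit M = (M $$ (0,0), vec (dim_col M - 1) (\<lambda>j. M $$ (0, Suc j)), vec (dim_row M - 1) (\<lambda>i. M $$ (Suc i, 0)),
     mat (dim_row M - 1) (dim_col M - 1) (\<lambda>(i,j). M $$ (Suc i, Suc j) - M $$ (Suc i, 0) * M $$ (0, Suc j) / M $$ (0,0)))"

definition fjoin :: "'a::field \<times> 'a vec \<times> 'a vec \<times> 'a mat \<Rightarrow> 'a mat" where
  "fjoin p = (case p of (a, r, c, N) \<Rightarrow> blk a r c N)"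

lemma fjoin_gsplit: assumes M: "M \<in> carrier_mat (Suc n) (Suc k)" and a: "M $$ (0,0) \<noteq> 0"
  shows "fjoin (gsplit M) = M"
proof -
  have d: "dim_row M = Suc n" "dim_col M = Suc k" using M by auto
  show ?thesis
  proof (rule eq_matI)
    show "dim_row (fjoin (gsplit M)) = dim_row M" "dim_col (fjoin (gsplit M)) = dim_col M"
      unfolding fjoin_def gsplit_def blk_def d by simp_all
    fix i j assume "i < dim_row M" "j < dim_col M"
    then have i: "i < Suc n" "j < Suc k" using d by auto
    show "fjoin (gsplit M) $$ (i, j) = M $$ (i, j)"
      unfolding fjoin_def gsplit_def d
      using i a by (cases i; cases j) (auto simp: blk_index)
  qed
qed

lemma gsplit_fjoin: assumes a: "a \<noteq> 0" and r: "r \<in> carrier_vec k" and c: "c \<in> carrier_vec n" and N: "N \<in> carrier_mat n k"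
  shows "gsplit (fjoin (a, r, c, N)) = (a, r, c, N)"
proof -
  have dc: "dim_vec c = n" and dr: "dim_vec r = k" using r c by auto
  have dM: "dim_row (blk a r c N) = Suc n" "dim_col (blk a r c N) = Suc k" unfolding blk_def dc dr by simp_all
  have e1: "blk a r c N $$ (0,0) = a" using blk_index[of 0 c 0 r a N] by simp
  have e2: "vec k (\<lambda>j. blk a r c N $$ (0, Suc j)) = r"
    by (rule eq_vecI) (use dr blk_index[of 0 c "Suc _" r a N] in auto)
  have e3: "vec n (\<lambda>i. blk a r c N $$ (Suc i, 0)) = c"
    by (rule eq_vecI) (use dc blk_index[of "Suc _" c 0 r a N] in auto)
  have e4: "mat n k (\<lambda>(i,j). blk a r c N $$ (Suc i, Suc j) - blk a r c N $$ (Suc i, 0) * blk a r c N $$ (0, Suc j) / blk a r c N $$ (0,0)) = N"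
  proof (rule eq_matI)
    fix i j assume "i < dim_row N" "j < dim_col N"
    then have i: "i < n" "j < k" using N by auto
    show "mat n k (\<lambda>(i,j). blk a r c N $$ (Suc i, Suc j) - blk a r c N $$ (Suc i, 0) * blk a r c N $$ (0, Suc j) / blk a r c N $$ (0,0)) $$ (i, j) = N $$ (i, j)"
      using i dc dr by (simp add: blk_index)
  qed (use N in auto)
  show ?thesis unfolding fjoin_def gsplit_def dM using e1 e2 e3 e4 dM by simp
qed

lemma mrank_blk: assumes a: "a \<noteq> 0" and r: "r \<in> carrier_vec k" and c: "c \<in> carrier_vec n" and N: "N \<in> carrier_mat n (k::nat)"
  shows "mrank (blk a r c N) = Suc (mrank N)"
proof -
  have "dim_row (blk a r c N) = Suc n" "dim_row N = n" using blk_carrier[OF r c] N by auto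
  thus ?thesis unfolding mrank_def using rank_blk[OF a r c N] by simp
qed

lemma trace1: "partial_trace 1 M = M $$ (0,0)" unfolding partial_trace_def by simp

lemma card_S:
  fixes t n k :: nat
  assumes t: "1 \<le> t"
  shows "card {M :: 'a::{finite,field} mat. M \<in> carrier_mat (Suc n) (Suc k) \<and> 1 \<le> mrank M \<and> mrank M \<le> t
                  \<and> partial_trace 1 M \<noteq> 0}
     = (card (UNIV :: 'a set) - 1) * (card (UNIV :: 'a set) ^ k * (card (UNIV :: 'a set) ^ n *
        card {N :: 'a mat. N \<in> carrier_mat n k \<and> mrank N \<le> t - 1}))"
proof -
  define S where "S = {M :: 'a mat. M \<in> carrier_mat (Suc n) (Suc k) \<and> 1 \<le> mrank M \<and> mrank M \<le> t
                  \<and> partial_trace 1 M \<noteq> 0}"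
  define R where "R = {N :: 'a mat. N \<in> carrier_mat n k \<and> mrank N \<le> t - 1}"
  define P where "P = (UNIV - {0 :: 'a}) \<times> ((carrier_vec k :: 'a vec set) \<times> ((carrier_vec n :: 'a vec set) \<times> R))"
  have "bij_betw gsplit S P"
  proof (rule bij_betw_byWitness[where f' = fjoin])
    show "\<forall>M\<in>S. fjoin (gsplit M) = M"
    proof
      fix M assume "M \<in> S"
      then have M: "M \<in> carrier_mat (Suc n) (Suc k)" and a: "M $$ (0,0) \<noteq> 0" unfolding S_def trace1 by simp_all
      show "fjoin (gsplit M) = M" by (rule fjoin_gsplit[OF M a])
    qed
    show "\<forall>p\<in>P. gsplit (fjoin p) = p"
    proof
      fix p assume "p \<in> P"
      then obtain a r c N where p: "p = (a, r, c, N)" and a: "a \<noteq> 0" and r: "r \<in> carrier_vec k" and c: "c \<in> carrier_vec n"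
        and N: "N \<in> carrier_mat n k"
        unfolding P_def R_def by blast
      show "gsplit (fjoin p) = p" unfolding p by (rule gsplit_fjoin[OF a r c N])
    qed
    show "fjoin ` P \<subseteq> S"
    proof
      fix M assume "M \<in> fjoin ` P"
      then obtain p where pP: "p \<in> P" and Mp: "M = fjoin p" by blast
      then obtain a r c N where p: "p = (a, r, c, N)" and a: "a \<noteq> 0" and r: "r \<in> carrier_vec k" and c: "c \<in> carrier_vec n"
        and N: "N \<in> carrier_mat n k" and Nr: "mrank N \<le> t - 1"
        unfolding P_def R_def by blast
      have M: "M = blk a r c N" unfolding Mp p fjoin_def by simp
      have a0: "M $$ (0,0) = a" unfolding M using blk_index[of 0 c 0 r a N] by simp
      have mr: "mrank M = Suc (mrank N)" unfolding M by (rule mrank_blk[OF a r c N])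
      have Mc: "M \<in> carrier_mat (Suc n) (Suc k)" unfolding M by (rule blk_carrier[OF r c])
      have "1 \<le> mrank M" "mrank M \<le> t" using mr Nr t by linarith+
      then show "M \<in> S" unfolding S_def trace1 using Mc a0 a by simp
    qed
    show "gsplit ` S \<subseteq> P"
    proof
      fix p assume "p \<in> gsplit ` S"
      then obtain M where MS: "M \<in> S" and p: "p = gsplit M" by blast
      then have M: "M \<in> carrier_mat (Suc n) (Suc k)" and Mr: "mrank M \<le> t" and a: "M $$ (0,0) \<noteq> 0"
        unfolding S_def trace1 by simp_all
      obtain a r c N where p': "p = (a, r, c, N)" by (cases p) auto
      have d: "dim_row M = Suc n" "dim_col M = Suc k" using M by auto
      have eqs: "a = M $$ (0,0)" "r = vec k (\<lambda>j. M $$ (0, Suc j))" "c = vec n (\<lambda>i. M $$ (Suc i, 0))"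
        "N = mat n k (\<lambda>(i,j). M $$ (Suc i, Suc j) - M $$ (Suc i, 0) * M $$ (0, Suc j) / M $$ (0,0))"
        using p[unfolded p' gsplit_def d] by simp_all
      have comps: "r \<in> carrier_vec k" "c \<in> carrier_vec n" "N \<in> carrier_mat n k"
        unfolding eqs by simp_all
      have "fjoin p = M" unfolding p using fjoin_gsplit[OF M a] .
      then have "blk a r c N = M" unfolding p' fjoin_def by simp
      moreover have a': "a \<noteq> 0" using eqs(1) a by simp
      ultimately have "mrank M = Suc (mrank N)" using mrank_blk[OF a' comps] by simp
      then have "Suc (mrank N) \<le> t" using Mr by simp
      then have "mrank N \<le> t - 1" by linarith
      then show "p \<in> P" unfolding P_def R_def p' using comps a eqs(1) by simp
    qed
  qed
  then have "card S = card P" by (rule bij_betw_same_card)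
  also have "card P = card (UNIV - {0 :: 'a}) * (card (carrier_vec k :: 'a vec set) * (card (carrier_vec n :: 'a vec set) * card R))"
    unfolding P_def by (simp only: card_cartesian_product)
  also have "card (UNIV - {0 :: 'a}) = card (UNIV :: 'a set) - 1" by (simp add: card_Diff_singleton)
  finally show ?thesis unfolding S_def R_def card_carrier_vec' .
qed

lemma card_R: "card {N :: 'a::{finite,field} mat. N \<in> carrier_mat n k \<and> mrank N \<le> s} = nu TYPE('a) s n k"
proof -
  have "{N :: 'a mat. N \<in> carrier_mat n k \<and> mrank N \<le> s} = (\<Union>j\<in>{..s}. {N. N \<in> carrier_mat n k \<and> mrank N = j})"
    by auto
  moreover have "card (\<Union>j\<in>{..s}. {N :: 'a mat. N \<in> carrier_mat n k \<and> mrank N = j})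
     = (\<Sum>j\<le>s. card {N :: 'a mat. N \<in> carrier_mat n k \<and> mrank N = j})"
    by (rule card_UN_disjoint) (auto intro: finite_subset[OF _ finite_carrier_mat'])
  ultimately show ?thesis unfolding nu_def mu_def by simp
qed

theorem proposition1:
  fixes t l m :: nat
  assumes "1 \<le> t" and "t \<le> l" and "l \<le> m"
  shows "w_hat TYPE('a::{finite,field}) 1 t l m
           = real (card (UNIV :: 'a set) ^ (l + m - 2)) * real (nu TYPE('a) (t - 1) (l - 1) (m - 1))"
proof -
  obtain n where n: "l = Suc n" using assms by (cases l) auto
  obtain k where k: "m = Suc k" using assms by (cases m) auto
  define q where "q = card (UNIV :: 'a set)"
  have q2: "2 \<le> q"
  proof -
    have "card {0 :: 'a, 1} = 2" by simp
    moreover have "card {0 :: 'a, 1} \<le> q" unfolding q_def by (rule card_mono) auto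
    ultimately show ?thesis by simp
  qed
  have cs: "card {M :: 'a mat. M \<in> carrier_mat l m \<and> 1 \<le> mrank M \<and> mrank M \<le> t \<and> partial_trace 1 M \<noteq> 0}
     = (q - 1) * (q ^ k * (q ^ n * nu TYPE('a) (t - 1) n k))"
    unfolding n k q_def using card_S[OF assms(1), of n k] unfolding card_R .
  have e: "l + m - 2 = n + k" unfolding n k by simp
  have q1: "real (q - 1) = real q - 1" using q2 by simp
  have "w_hat TYPE('a) 1 t l m = real ((q - 1) * (q ^ k * (q ^ n * nu TYPE('a) (t - 1) n k))) / (real q - 1)"
    unfolding w_hat_def cs q_def by simp
  also have "\<dots> = real (q ^ (n + k)) * real (nu TYPE('a) (t - 1) n k)"
    using q2 q1 by (simp add: power_add field_simps)
  finally show ?thesis unfolding e q_def n k by simp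
qed


end
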